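(* Let $b\ge 1$, and let $\boldsymbol{\Omega}\in\mathbb{R}^{b\times b}$ and $\widetilde{\mathbf r}\in\mathbb{R}^{b}$ be the matrix and vector defined in the context (arising from one inner loop of the GN-BP algorithm). Let $q_1,\dots,q_b\in\{0,1\}$ be a realization of independent $\mathrm{Ber}(p)$ random variables, and set $\mathbf Q=\mathrm{diag}(1-q_1,\dots,1-q_b)$, $\mathbf R=\mathrm{diag}(q_1,\dots,q_b)$. Let $0<\alpha_1<1$ and $\alpha_2=1-\alpha_1$. Define $$\bar{\mathbf r}=(\mathbf Q+\alpha_2\mathbf R)\,\widetilde{\mathbf r},\qquad \bar{\boldsymbol\Omega}=\mathbf Q\boldsymbol\Omega+\alpha_2\mathbf R\boldsymbol\Omega-\alpha_1\mathbf R,$$ and consider the damped mean-message iteration $\mathbf r_{\mathrm d}^{(\tau)}=\bar{\mathbf r}-\bar{\boldsymbol\Omega}\,\mathbf r_{\mathrm d}^{(\tau-1)}$, $\tau=1,2,\dots$. Then $\mathbf r_{\mathrm d}^{(\tau)}$ converges to a unique fixed point $\hat{\mathbf r}_{\mathrm d}=\lim_{\tau\to\infty}\mathbf r_{\mathrm d}^{(\tau)}$ for every initial point $\mathbf r_{\mathrm d}^{(0)}\in\mathbb{R}^b$ if and only if the spectral radius satisfies $\rho(\bar{\boldsymbol\Omega})<1$. Furthermore, in that case $\hat{\mathbf r}_{\mathrm d}=\hat{\mathbf r}_{\mathrm s}:=(\mathbf I+\boldsymbol\Omega)^{-1}\widetilde{\mathbf r}$, i.e., the fixed point coincides with the fixed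 point of the undamped synchronous iteration $\mathbf r_{\mathrm s}^{(\tau)}=\widetilde{\mathbf r}-\boldsymbol\Omega\,\mathbf r_{\mathrm s}^{(\tau-1)}$.
   Context: Setting (one inner loop of Gauss-Newton belief propagation for the linearized model $\mathbf r(\mathbf x^{(\nu)})=\mathbf J(\mathbf x^{(\nu)})\Delta\mathbf x+\mathbf u$): consider the bipartite subgraph of the factor graph consisting of variable nodes $\mathcal V$ (state increments $\Delta x_s$), indirect factor nodes $f_1,\dots,f_m$ (one per indirect measurement with residual $r_i$ and variance $v_i>0$), and the set $\mathcal B$ of edges between them, $b=|\mathcal B|$; $f_i$ has degree $d_i$, and edges are ordered grouped by factor node ($f_1$'s edges first, etc.). Vectors in $\mathbb R^b$ are indexed by edges. Definitions: $\mathbf C=\mathrm{diag}$ of the (nonzero) Jacobian coefficients $C_{\Delta x_p}=\partial h_i/\partial x_p$ on each edge $(f_i,\Delta x_p)$. $\boldsymbol\Pi=\mathrm{blockdiag}(\mathbf\Pi_1,\dots,\mathbf\Pi_m)$ with $\mathbf\Pi_i=\mathbf 1_{d_i\times d_i}-\mathbf I_{d_i}$. $\mathbf D=\mathbf C^{-1}\boldsymbol\Pi\mathbf C$. $\boldsymbol\Gamma\in\{0,1\}^{b\times b}$ has entry $1$ at (edge $(f_i,\Delta x_q)$, edge $(f_j,\Delta x_{q'})$) iff $i\ne j$ and $q=q'$ (both edges incident to the same variable node), and $0$ otherwise. $\mathbf L$ is diagonal with entry on edge $(f_i,\Delta x_q)$ equal to the inverse variance of the message from the singly-connected (direct/virtual/slack)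 factor node attached to $\Delta x_q$; $\mathbf r_{\mathrm b}$ is the vector with entry on edge $(f_i,\Delta x_q)$ equal to the mean of that singly-connected factor node's message to $\Delta x_q$. $\mathbf r_{\mathrm a}$ has entry $r_i$ on every edge of $f_i$. $\hat{\boldsymbol\Sigma}_{\mathrm s}=\mathrm{diag}(\hat{\mathbf v}_{\mathrm s})$, where $\hat{\mathbf v}_{\mathrm s}>0$ is the limit of the factor-to-variable message variances. $\hat{\mathbf A}=\boldsymbol\Gamma\hat{\boldsymbol\Sigma}_{\mathrm s}^{-1}\boldsymbol\Gamma^{\mathrm T}+\mathbf L$, and for a square matrix $\mathbf A$, $\mathfrak D(\mathbf A)=\mathrm{diag}(A_{11},\dots,A_{bb})$. Then $\boldsymbol\Omega=\mathbf D\,(\mathfrak D(\hat{\mathbf A}))^{-1}\boldsymbol\Gamma\hat{\boldsymbol\Sigma}_{\mathrm s}^{-1}$ and $\widetilde{\mathbf r}=\mathbf C^{-1}\mathbf r_{\mathrm a}-\mathbf D\,(\mathfrak D(\hat{\mathbf A}))^{-1}\mathbf L\,\mathbf r_{\mathrm b}$. *)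

theory Defs
  imports "Jordan_Normal_Form.Spectral_Radius" "Jordan_Normal_Form.Gauss_Jordan_Elimination"
begin

text \<open>Edges of the bipartite subgraph are indexed 0..b-1. fac e is the index of the
indirect factor node incident to edge e, var e the index of the variable node.
c e is the Jacobian coefficient on edge e, rm i the residual r_i of factor f_i,
lam s and mu s are the inverse variance and the mean of the message from the
singly-connected factor node attached to variable node s, vs e the limit variance
of the factor-to-variable message on edge e.\<close>

definition diag_inv :: "nat \<Rightarrow> (nat \<Rightarrow> real) \<Rightarrow> real mat" where
  "diag_inv b f = mat_diag b (\<lambda>e. 1 / f e)"

definition Cmat :: "nat \<Rightarrow> (nat \<Rightarrow> real) \<Rightarrow> real mat" where
  "Cmat b c = mat_diag b c"

definition Pimat :: "nat \<Rightarrow> (nat \<Rightarrow> nat) \<Rightarrow> real mat" where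
  "Pimat b fac = mat b b (\<lambda>(e, e'). if fac e = fac e' \<and> e \<noteq> e' then 1 else 0)"

definition Dmat :: "nat \<Rightarrow> (nat \<Rightarrow> nat) \<Rightarrow> (nat \<Rightarrow> real) \<Rightarrow> real mat" where
  "Dmat b fac c = diag_inv b c * Pimat b fac * Cmat b c"

definition Gammat :: "nat \<Rightarrow> (nat \<Rightarrow> nat) \<Rightarrow> (nat \<Rightarrow> nat) \<Rightarrow> real mat" where
  "Gammat b fac var = mat b b (\<lambda>(e, e'). if fac e \<noteq> fac e' \<and> var e = var e' then 1 else 0)"

definition Lmat :: "nat \<Rightarrow> (nat \<Rightarrow> nat) \<Rightarrow> (nat \<Rightarrow> real) \<Rightarrow> real mat" where
  "Lmat b var lam = mat_diag b (\<lambda>e. lam (var e))"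

definition Ahat :: "nat \<Rightarrow> (nat \<Rightarrow> nat) \<Rightarrow> (nat \<Rightarrow> nat) \<Rightarrow> (nat \<Rightarrow> real) \<Rightarrow> (nat \<Rightarrow> real) \<Rightarrow> real mat" where
  "Ahat b fac var lam vs =
     Gammat b fac var * diag_inv b vs * transpose_mat (Gammat b fac var) + Lmat b var lam"

definition diag_part :: "real mat \<Rightarrow> real mat" where
  "diag_part A = mat_diag (dim_row A) (\<lambda>e. A $$ (e, e))"

definition Omega :: "nat \<Rightarrow> (nat \<Rightarrow> nat) \<Rightarrow> (nat \<Rightarrow> nat) \<Rightarrow> (nat \<Rightarrow> real) \<Rightarrow> (nat \<Rightarrow> real)
    \<Rightarrow> (nat \<Rightarrow> real) \<Rightarrow> real mat" where
  "Omega b fac var c lam vs =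
     Dmat b fac c * the (mat_inverse (diag_part (Ahat b fac var lam vs)))
       * Gammat b fac var * diag_inv b vs"

definition rtilde :: "nat \<Rightarrow> (nat \<Rightarrow> nat) \<Rightarrow> (nat \<Rightarrow> nat) \<Rightarrow> (nat \<Rightarrow> real) \<Rightarrow> (nat \<Rightarrow> real)
    \<Rightarrow> (nat \<Rightarrow> real) \<Rightarrow> (nat \<Rightarrow> real) \<Rightarrow> (nat \<Rightarrow> real) \<Rightarrow> real vec" where
  "rtilde b fac var c rm lam mu vs =
     diag_inv b c *\<^sub>v vec b (\<lambda>e. rm (fac e))
     - (Dmat b fac c * the (mat_inverse (diag_part (Ahat b fac var lam vs))) * Lmat b var lam)
         *\<^sub>v vec b (\<lambda>e. mu (var e))"

definition affine_iter :: "real vec \<Rightarrow> real mat \<Rightarrow> real vec \<Rightarrow> nat \<Rightarrow> real vec" where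
  "affine_iter r W x0 \<tau> = ((\<lambda>x. r - W *\<^sub>v x) ^^ \<tau>) x0"

definition vec_conv :: "nat \<Rightarrow> (nat \<Rightarrow> real vec) \<Rightarrow> real vec \<Rightarrow> bool" where
  "vec_conv b X L = (\<forall>i<b. (\<lambda>\<tau>. X \<tau> $ i) \<longlonglongrightarrow> L $ i)"

end

theory Submission
  imports Defs
begin

lemma mv_sum: "A \<in> carrier_mat n n \<Longrightarrow> v \<in> carrier_vec n \<Longrightarrow> i < n \<Longrightarrow>
   (A *\<^sub>v v) $ i = (\<Sum>j<n. A $$ (i,j) * v $ j)"
  by (auto simp: scalar_prod_def atLeast0LessThan)

lemma diag_dims[simp]: "dim_row (mat_diag n f) = n" "dim_col (mat_diag n f) = n"
  by (auto simp: mat_diag_def)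

lemma diag_idx: "i < n \<Longrightarrow> j < n \<Longrightarrow> mat_diag n f $$ (i,j) = (if i = j then f j else 0)"
  by (simp add: mat_diag_def)

lemma diag_mv: "v \<in> carrier_vec n \<Longrightarrow> i < n \<Longrightarrow> (mat_diag n f *\<^sub>v v) $ i = f i * v $ i"
proof -
  assume v: "v \<in> carrier_vec n" and i: "i < n"
  have "(mat_diag n f *\<^sub>v v) $ i = (\<Sum>j<n. (if i = j then f i * v $ j else 0))"
    by (subst mv_sum[OF mat_diag_dim v i], rule sum.cong, auto simp: diag_idx i)
  also have "\<dots> = f i * v $ i" using i by (simp add: sum.delta)
  finally show ?thesis .
qed

lemma onep_idx: fixes A :: "'a :: comm_ring_1 mat" shows "A \<in> carrier_mat n n \<Longrightarrow> w \<in> carrier_vec n \<Longrightarrow> i < n \<Longrightarrow>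
  ((1\<^sub>m n + A) *\<^sub>v w) $ i = w $ i + (A *\<^sub>v w) $ i"
proof -
  assume A: "A \<in> carrier_mat n n" and w: "w \<in> carrier_vec n" and i: "i < n"
  have "(1\<^sub>m n + A) *\<^sub>v w = w + A *\<^sub>v w"
    by (simp only: add_mult_distrib_mat_vec[OF one_carrier_mat A w] one_mult_mat_vec[OF w])
  thus ?thesis using i A by simp
qed

lemma zero_iff: "w \<in> carrier_vec n \<Longrightarrow> (w = 0\<^sub>v n) \<longleftrightarrow> (\<forall>i<n. w $ i = 0)"
  by (auto simp: vec_eq_iff)

lemma inv_from_inj: fixes A :: "real mat"
  assumes A: "A \<in> carrier_mat n n"
    and inj: "\<forall>w\<in>carrier_vec n. A *\<^sub>v w = 0\<^sub>v n \<longrightarrow> w = 0\<^sub>v n"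
  shows "\<exists>B. mat_inverse A = Some B \<and> A * B = 1\<^sub>m n \<and> B * A = 1\<^sub>m n \<and> B \<in> carrier_mat n n"
proof -
  have "det A \<noteq> 0" using det_0_iff_vec_prod_zero[OF A] inj by auto
  from det_non_zero_imp_unit[OF A this] have "A \<in> Units (ring_mat TYPE(real) n n)" .
  hence "mat_inverse A \<noteq> None" using mat_inverse(1)[OF A, of n] by auto
  then obtain B where "mat_inverse A = Some B" by auto
  with mat_inverse(2)[OF A this] show ?thesis by auto
qed

lemma main:
  fixes b :: nat and Om :: "real mat" and rt :: "real vec" and q :: "nat \<Rightarrow> real" and \<alpha>1 \<alpha>2 :: real
  assumes b: "b \<ge> 1" and Om: "Om \<in> carrier_mat b b" and rt: "rt \<in> carrier_vec b"
    and q01: "\<forall>e<b. q e \<in> {0, 1}" and a1: "0 < \<alpha>1" "\<alpha>1 < 1" and a2: "\<alpha>2 = 1 - \<alpha>1"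
  defines "Q \<equiv> mat_diag b (\<lambda>e. 1 - q e)"
    and "R \<equiv> mat_diag b q"
  defines "rbar \<equiv> (Q + \<alpha>2 \<cdot>\<^sub>m R) *\<^sub>v rt"
    and "M \<equiv> Q * Om + \<alpha>2 \<cdot>\<^sub>m (R * Om) - \<alpha>1 \<cdot>\<^sub>m R"
  defines "CONV \<equiv> (\<exists>rd \<in> carrier_vec b.
              rd = rbar - M *\<^sub>v rd
            \<and> (\<forall>y \<in> carrier_vec b. y = rbar - M *\<^sub>v y \<longrightarrow> y = rd)
            \<and> (\<forall>x0 \<in> carrier_vec b. vec_conv b (affine_iter rbar M x0) rd))"
  shows "(CONV \<longleftrightarrow> spectral_radius (map_mat complex_of_real M) < 1)
       \<and> (CONV \<longrightarrow> mat_inverse (1\<^sub>m b + Om) \<noteq> None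
             \<and> (\<forall>x0 \<in> carrier_vec b.
                   vec_conv b (affine_iter rbar M x0) (the (mat_inverse (1\<^sub>m b + Om)) *\<^sub>v rt)))"
proof -
  define p where "p i = 1 - \<alpha>1 * q i" for i
  have pp: "p i > 0" if "i < b" for i
    using q01 a1 that by (auto simp: p_def)
  have Mc: "M \<in> carrier_mat b b" unfolding M_def Q_def R_def using Om by (intro carrier_matI) (auto simp: mat_diag_def)
  have Ment: "M $$ (i,j) = p i * Om $$ (i,j) - (if i = j then \<alpha>1 * q i else 0)"
    if i: "i < b" and j: "j < b" for i j
    unfolding M_def Q_def R_def using Om i j
    by (simp add: mat_diag_mult_left diag_idx p_def a2 algebra_simps)
  have Mv: "(M *\<^sub>v y) $ i = p i * (Om *\<^sub>v y) $ i - \<alpha>1 * q i * y $ i"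
    if y: "y \<in> carrier_vec b" and i: "i < b" for y i
  proof -
    have "(M *\<^sub>v y) $ i = (\<Sum>j<b. p i * (Om $$ (i,j) * y $ j) - (if i = j then \<alpha>1 * q i * y $ j else 0))"
      by (subst mv_sum[OF Mc y i], rule sum.cong, auto simp: Ment i algebra_simps)
    also have "\<dots> = p i * (\<Sum>j<b. Om $$ (i,j) * y $ j) - \<alpha>1 * q i * y $ i"
      using i by (simp add: sum_subtractf sum_distrib_left)
    finally show ?thesis using mv_sum[OF Om y i] by simp
  qed
  have Pd: "Q + \<alpha>2 \<cdot>\<^sub>m R = mat_diag b p"
    unfolding Q_def R_def by (rule eq_matI, auto simp: diag_idx p_def a2 algebra_simps)
  have rbc: "rbar \<in> carrier_vec b" unfolding rbar_def Pd by (rule mult_mat_vec_carrier[OF mat_diag_dim rt])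
  have rbi: "rbar $ i = p i * rt $ i" if "i < b" for i
    unfolding rbar_def Pd using diag_mv[OF rt that] .
  have fix_iff: "(y = rbar - M *\<^sub>v y) \<longleftrightarrow> (\<forall>i<b. y $ i + (Om *\<^sub>v y) $ i = rt $ i)"
    if y: "y \<in> carrier_vec b" for y
  proof -
    have "(y = rbar - M *\<^sub>v y) \<longleftrightarrow> (\<forall>i<b. y $ i = rbar $ i - (M *\<^sub>v y) $ i)"
      using y rbc Mc by (auto simp: vec_eq_iff)
    also have "\<dots> \<longleftrightarrow> (\<forall>i<b. y $ i + (Om *\<^sub>v y) $ i = rt $ i)"
    proof (intro all_cong1 imp_cong refl)
      fix i assume i: "i < b"
      have e: "rbar $ i - (M *\<^sub>v y) $ i - y $ i = p i * (rt $ i - y $ i - (Om *\<^sub>v y) $ i)"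
        unfolding Mv[OF y i] rbi[OF i] p_def by (simp add: algebra_simps)
      have "y $ i = rbar $ i - (M *\<^sub>v y) $ i \<longleftrightarrow> p i * (rt $ i - y $ i - (Om *\<^sub>v y) $ i) = 0"
        using e by linarith
      also have "\<dots> \<longleftrightarrow> y $ i + (Om *\<^sub>v y) $ i = rt $ i" using pp[OF i] by (simp; argo)
      finally show "y $ i = rbar $ i - (M *\<^sub>v y) $ i \<longleftrightarrow> y $ i + (Om *\<^sub>v y) $ i = rt $ i" .
    qed
    finally show ?thesis .
  qed
  define X where "X x0 k = affine_iter rbar M x0 k" for x0 k
  have XS: "X x0 (Suc k) = rbar - M *\<^sub>v X x0 k" for x0 k
    by (simp add: X_def affine_iter_def)
  have XS2: "X x0 (Suc k) = X (rbar - M *\<^sub>v x0) k" for x0 k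
    by (simp add: X_def affine_iter_def funpow_Suc_right del: funpow.simps)
  have X0: "X x0 0 = x0" for x0 by (simp add: X_def affine_iter_def)
  have stepc: "rbar - M *\<^sub>v x \<in> carrier_vec b" for x
    using rbc Mc unfolding carrier_vec_def by simp
  have Xc: "X x0 k \<in> carrier_vec b" if "x0 \<in> carrier_vec b" for x0 k
    using that by (cases k) (simp_all only: X0 XS stepc)
  have err: "(rbar - M *\<^sub>v x) $ i - rd $ i = - (\<Sum>j<b. M $$ (i,j) * (x $ j - rd $ j))"
    if rd: "rd \<in> carrier_vec b" "rd = rbar - M *\<^sub>v rd" and x: "x \<in> carrier_vec b" and i: "i < b"
    for rd x i
  proof -
    have "rd $ i = (rbar - M *\<^sub>v rd) $ i" by (subst rd(2)[symmetric]) (rule refl)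
    also have "\<dots> = rbar $ i - (M *\<^sub>v rd) $ i" using i Mc by simp

    moreover have "(rbar - M *\<^sub>v x) $ i = rbar $ i - (M *\<^sub>v x) $ i" using i Mc x by auto
    ultimately show ?thesis
      by (simp add: mv_sum[OF Mc x i] mv_sum[OF Mc rd(1) i] right_diff_distrib sum_subtractf)
  qed
  have b0: "b > 0" using b by simp
  let ?Mc = "map_mat complex_of_real M"
  have Mcc: "?Mc \<in> carrier_mat b b" using Mc by simp
  have Mcsum: "(?Mc *\<^sub>v v) $ i = (\<Sum>j<b. complex_of_real (M $$ (i,j)) * v $ j)"
    if "v \<in> carrier_vec b" "i < b" for v i
    using mv_sum[OF Mcc that] that Mc by simp
  have partA: "spectral_radius ?Mc < 1" if conv: CONV
  proof (rule ccontr)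
    assume "\<not> spectral_radius ?Mc < 1"
    hence r1: "spectral_radius ?Mc \<ge> 1" by simp
    from conv obtain rd where rd: "rd \<in> carrier_vec b" "rd = rbar - M *\<^sub>v rd"
      and cv: "\<And>x0. x0 \<in> carrier_vec b \<Longrightarrow> vec_conv b (X x0) rd"
      unfolding CONV_def X_def by blast
    from spectral_radius_mem_max(1)[OF Mcc b0] obtain ev where
      evs: "ev \<in> spectrum ?Mc" and evn: "cmod ev = spectral_radius ?Mc" by auto
    from evs obtain v where "eigenvector ?Mc v ev"
      unfolding spectrum_def eigenvalue_def by auto
    hence v: "v \<in> carrier_vec b" "v \<noteq> 0\<^sub>v b" "?Mc *\<^sub>v v = ev \<cdot>\<^sub>v v"
      unfolding eigenvector_def using Mc by auto
    have evi: "(\<Sum>j<b. complex_of_real (M $$ (i,j)) * v $ j) = ev * v $ i" if i: "i < b" for i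
    proof -
      have "(?Mc *\<^sub>v v) $ i = (ev \<cdot>\<^sub>v v) $ i" using v(3) by simp
      thus ?thesis using Mcsum[OF v(1) i] i v(1) by simp
    qed
    obtain j where j: "j < b" "v $ j \<noteq> 0"
      using v(1,2) by (metis carrier_vecD eq_vecI index_zero_vec(1) index_zero_vec(2))
    define xa where "xa = rd + vec b (\<lambda>j. Re (v $ j))"
    define xb where "xb = rd + vec b (\<lambda>j. Im (v $ j))"
    have xac: "xa \<in> carrier_vec b" "xb \<in> carrier_vec b" using rd(1) by (auto simp: xa_def xb_def)
    have claim: "\<forall>i<b. complex_of_real (X xa k $ i - rd $ i) + \<i> * complex_of_real (X xb k $ i - rd $ i)
                 = (- ev) ^ k * v $ i" for k
    proof (induction k)
      case 0
      show ?case using rd(1) by (auto simp: X0 xa_def xb_def complex_eq[symmetric])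
    next
      case (Suc k)
      show ?case
      proof (intro allI impI)
        fix i assume i: "i < b"
        have ea: "X xa (Suc k) $ i - rd $ i = - (\<Sum>j<b. M $$ (i,j) * (X xa k $ j - rd $ j))"
          unfolding XS by (rule err[OF rd Xc[OF xac(1)] i])
        have eb: "X xb (Suc k) $ i - rd $ i = - (\<Sum>j<b. M $$ (i,j) * (X xb k $ j - rd $ j))"
          unfolding XS by (rule err[OF rd Xc[OF xac(2)] i])
        have "complex_of_real (X xa (Suc k) $ i - rd $ i) + \<i> * complex_of_real (X xb (Suc k) $ i - rd $ i)
          = - (\<Sum>j<b. complex_of_real (M $$ (i,j) * (X xa k $ j - rd $ j))
                + \<i> * complex_of_real (M $$ (i,j) * (X xb k $ j - rd $ j)))"
          unfolding ea eb by (simp add: sum.distrib sum_distrib_left)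
        also have "\<dots> = - (\<Sum>j<b. complex_of_real (M $$ (i,j)) * (complex_of_real (X xa k $ j - rd $ j)
                + \<i> * complex_of_real (X xb k $ j - rd $ j)))"
          by (intro arg_cong[where f=uminus] sum.cong refl) (simp add: algebra_simps)
        also have "\<dots> = - (\<Sum>j<b. complex_of_real (M $$ (i,j)) * ((- ev) ^ k * v $ j))"
          using Suc.IH by simp
        also have "\<dots> = - ((- ev) ^ k * (\<Sum>j<b. complex_of_real (M $$ (i,j)) * v $ j))"
          by (simp add: sum_distrib_left algebra_simps)
        also have "\<dots> = (- ev) ^ Suc k * v $ i" using evi[OF i] by simp
        finally show "complex_of_real (X xa (Suc k) $ i - rd $ i) + \<i> * complex_of_real (X xb (Suc k) $ i - rd $ i)
                 = (- ev) ^ Suc k * v $ i" .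
      qed
    qed
    have ta: "(\<lambda>k. X xa k $ j) \<longlonglongrightarrow> rd $ j" using cv[OF xac(1)] j(1) unfolding vec_conv_def by blast
    have tb: "(\<lambda>k. X xb k $ j) \<longlonglongrightarrow> rd $ j" using cv[OF xac(2)] j(1) unfolding vec_conv_def by blast
    have "(\<lambda>k. complex_of_real (X xa k $ j - rd $ j) + \<i> * complex_of_real (X xb k $ j - rd $ j))
          \<longlonglongrightarrow> complex_of_real (rd $ j - rd $ j) + \<i> * complex_of_real (rd $ j - rd $ j)"
      by (intro tendsto_intros ta tb)
    hence "(\<lambda>k. (- ev) ^ k * v $ j) \<longlonglongrightarrow> 0" using claim j(1) by simp
    hence "(\<lambda>k. cmod ((- ev) ^ k * v $ j)) \<longlonglongrightarrow> 0" by (simp add: tendsto_norm_zero)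
    moreover have "\<exists>N. \<forall>k\<ge>N. cmod (v $ j) \<le> cmod ((- ev) ^ k * v $ j)"
    proof -
      have "cmod (v $ j) \<le> cmod ((- ev) ^ k * v $ j)" for k
      proof -
        have "1 \<le> cmod ev ^ k" using r1 evn by (simp add: one_le_power)
        hence "1 * cmod (v $ j) \<le> cmod ev ^ k * cmod (v $ j)" by (rule mult_right_mono) simp
        thus ?thesis by (simp add: norm_mult norm_power)
      qed
      thus ?thesis by blast
    qed
    ultimately have "cmod (v $ j) \<le> 0" by (rule LIMSEQ_le_const)
    thus False using j(2) by simp
  qed
  have fixc: "(y = rbar - M *\<^sub>v y) \<longleftrightarrow> (\<forall>i<b. y $ i + (M *\<^sub>v y) $ i = rbar $ i)"
    if y: "y \<in> carrier_vec b" for y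
    using y rbc Mc by (auto simp: vec_eq_iff)
  have partC: "mat_inverse (1\<^sub>m b + Om) \<noteq> None \<and>
      (\<forall>x0 \<in> carrier_vec b. vec_conv b (X x0) (the (mat_inverse (1\<^sub>m b + Om)) *\<^sub>v rt))"
    if conv: CONV
  proof -
    from conv obtain rd where rd: "rd \<in> carrier_vec b" "rd = rbar - M *\<^sub>v rd"
      and uq: "\<And>y. y \<in> carrier_vec b \<Longrightarrow> y = rbar - M *\<^sub>v y \<Longrightarrow> y = rd"
      and cv: "\<And>x0. x0 \<in> carrier_vec b \<Longrightarrow> vec_conv b (X x0) rd"
      unfolding CONV_def X_def by blast
    have rdf: "\<forall>i<b. rd $ i + (Om *\<^sub>v rd) $ i = rt $ i" using fix_iff[OF rd(1)] rd(2) by blast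
    have Oc: "1\<^sub>m b + Om \<in> carrier_mat b b" using Om by simp
    have inj: "\<forall>w\<in>carrier_vec b. (1\<^sub>m b + Om) *\<^sub>v w = 0\<^sub>v b \<longrightarrow> w = 0\<^sub>v b"
    proof (intro ballI impI)
      fix w assume w: "w \<in> carrier_vec b" and z: "(1\<^sub>m b + Om) *\<^sub>v w = 0\<^sub>v b"
      have wi: "w $ i + (Om *\<^sub>v w) $ i = 0" if i: "i < b" for i
        using arg_cong[OF z, of "\<lambda>v. v $ i"] onep_idx[OF Om w i] i by simp
      have yc: "rd + w \<in> carrier_vec b" using rd(1) w by simp
      have "\<forall>i<b. (rd + w) $ i + (Om *\<^sub>v (rd + w)) $ i = rt $ i"
      proof (intro allI impI)
        fix i assume i: "i < b"
        have "(Om *\<^sub>v (rd + w)) $ i = (Om *\<^sub>v rd) $ i + (Om *\<^sub>v w) $ i"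
          using mult_add_distrib_mat_vec[OF Om rd(1) w] i Om by simp
        thus "(rd + w) $ i + (Om *\<^sub>v (rd + w)) $ i = rt $ i" using rdf[rule_format, OF i] wi[OF i] i w by simp
      qed
      hence "rd + w = rd" using uq[OF yc] fix_iff[OF yc] by blast
      thus "w = 0\<^sub>v b" using w rd(1) by (auto simp: vec_eq_iff)
    qed
    from inv_from_inj[OF Oc inj] obtain B where B: "mat_inverse (1\<^sub>m b + Om) = Some B"
      "(1\<^sub>m b + Om) * B = 1\<^sub>m b" "B \<in> carrier_mat b b" by blast
    have yc: "B *\<^sub>v rt \<in> carrier_vec b" using B(3) rt by simp
    have "(1\<^sub>m b + Om) *\<^sub>v (B *\<^sub>v rt) = rt"
      using assoc_mult_mat_vec[OF Oc B(3) rt, symmetric] B(2) rt by simp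
    hence "\<forall>i<b. (B *\<^sub>v rt) $ i + (Om *\<^sub>v (B *\<^sub>v rt)) $ i = rt $ i"
      using onep_idx[OF Om yc] by metis
    hence "B *\<^sub>v rt = rd" using uq[OF yc] fix_iff[OF yc] by blast
    thus ?thesis using B(1) cv by simp
  qed
  have partB: CONV if rho: "spectral_radius ?Mc < 1"
  proof -
    have Ic: "1\<^sub>m b + M \<in> carrier_mat b b" using Mc by simp
    have inj: "\<forall>w\<in>carrier_vec b. (1\<^sub>m b + M) *\<^sub>v w = 0\<^sub>v b \<longrightarrow> w = 0\<^sub>v b"
    proof (intro ballI impI, rule ccontr)
      fix w assume w: "w \<in> carrier_vec b" and z: "(1\<^sub>m b + M) *\<^sub>v w = 0\<^sub>v b" and nz: "w \<noteq> 0\<^sub>v b"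
      have wi: "(M *\<^sub>v w) $ i = - w $ i" if i: "i < b" for i
        using arg_cong[OF z, of "\<lambda>v. v $ i"] onep_idx[OF Mc w i] i by simp
      let ?wc = "map_vec complex_of_real w"
      have wcc: "?wc \<in> carrier_vec b" using w by simp
      have "eigenvector ?Mc ?wc (-1)"
        unfolding eigenvector_def
      proof (intro conjI)
        show "?wc \<in> carrier_vec (dim_row ?Mc)" using w Mc by simp
        show "?wc \<noteq> 0\<^sub>v (dim_row ?Mc)"
        proof
          assume "?wc = 0\<^sub>v (dim_row ?Mc)"
          hence "\<forall>i<b. w $ i = 0" using w Mc by (auto simp: vec_eq_iff)
          thus False using nz zero_iff[OF w] by simp
        qed
        show "?Mc *\<^sub>v ?wc = (-1) \<cdot>\<^sub>v ?wc"
        proof (rule eq_vecI)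
          fix i assume "i < dim_vec ((-1) \<cdot>\<^sub>v ?wc)"
          hence i: "i < b" using w by simp
          have "(?Mc *\<^sub>v ?wc) $ i = complex_of_real ((M *\<^sub>v w) $ i)"
            using of_real_hom.mult_mat_vec_hom[OF Mc w] i Mc
            by (metis carrier_matD(1) dim_mult_mat_vec index_map_vec(1))
          thus "(?Mc *\<^sub>v ?wc) $ i = ((-1) \<cdot>\<^sub>v ?wc) $ i" using wi[OF i] i w by simp
        qed (use w Mc in simp)
      qed
      hence "-1 \<in> spectrum ?Mc" unfolding spectrum_def eigenvalue_def by auto
      hence "cmod (-1) \<in> cmod ` spectrum ?Mc" by (rule imageI)
      hence "cmod (-1) \<le> spectral_radius ?Mc" by (rule spectral_radius_mem_max(2)[OF Mcc b0])
      thus False using rho by simp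
    qed
    from inv_from_inj[OF Ic inj] obtain B where B:
      "(1\<^sub>m b + M) * B = 1\<^sub>m b" "B \<in> carrier_mat b b" by blast
    define rd where "rd = B *\<^sub>v rbar"
    have rdc: "rd \<in> carrier_vec b" using B(2) rbc by (simp add: rd_def)
    have "(1\<^sub>m b + M) *\<^sub>v rd = rbar"
      using assoc_mult_mat_vec[OF Ic B(2) rbc, symmetric] B(1) rbc by (simp add: rd_def)
    hence rdi: "\<forall>i<b. rd $ i + (M *\<^sub>v rd) $ i = rbar $ i"
      using onep_idx[OF Mc rdc] by metis
    hence rdf: "rd = rbar - M *\<^sub>v rd" using fixc[OF rdc] by blast
    have uq: "y = rd" if y: "y \<in> carrier_vec b" and yf: "y = rbar - M *\<^sub>v y" for y
    proof -
      have yi: "\<forall>i<b. y $ i + (M *\<^sub>v y) $ i = rbar $ i" using fixc[OF y] yf by blast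
      have wc: "y - rd \<in> carrier_vec b" using y rdc by simp
      have "(1\<^sub>m b + M) *\<^sub>v (y - rd) = 0\<^sub>v b"
      proof (rule eq_vecI)
        fix i assume "i < dim_vec (0\<^sub>v b :: real vec)"
        hence i: "i < b" by simp
        have "(M *\<^sub>v (y - rd)) $ i = (M *\<^sub>v y) $ i - (M *\<^sub>v rd) $ i"
          using mult_minus_distrib_mat_vec[OF Mc y rdc] i Mc by simp
        thus "((1\<^sub>m b + M) *\<^sub>v (y - rd)) $ i = 0\<^sub>v b $ i"
          using onep_idx[OF Mc wc i] yi[rule_format, OF i] rdi[rule_format, OF i] i rdc by simp
      qed (use Mc in simp)
      hence "y - rd = 0\<^sub>v b" using inj wc by blast
      thus ?thesis using y rdc by (auto simp: vec_eq_iff)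
    qed
    obtain ev0 where "ev0 \<in> spectrum ?Mc" "cmod ev0 = spectral_radius ?Mc"
      using spectral_radius_mem_max(1)[OF Mcc b0] by auto
    hence r0: "0 \<le> spectral_radius ?Mc" by (metis norm_ge_zero)
    define s where "s = (spectral_radius ?Mc + 1) / 2"
    have s: "0 < s" "s < 1" "spectral_radius ?Mc < s" using r0 rho by (auto simp: s_def)
    define c :: complex where "c = complex_of_real (- 1 / s)"
    have sc: "complex_of_real s * c = -1" using s by (simp add: c_def)
    define Bc where "Bc = c \<cdot>\<^sub>m ?Mc"
    have Bcc: "Bc \<in> carrier_mat b b" using Mcc by (simp add: Bc_def)
    have Bcsum: "(Bc *\<^sub>v u) $ i = c * (\<Sum>j<b. complex_of_real (M $$ (i,j)) * u $ j)"
      if u: "u \<in> carrier_vec b" and i: "i < b" for u i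
      using mv_sum[OF Bcc u i] i Mc by (simp add: Bc_def sum_distrib_left algebra_simps)
    have rB: "spectral_radius Bc < 1"
    proof -
      obtain ev' where ev': "ev' \<in> spectrum Bc" "cmod ev' = spectral_radius Bc"
        using spectral_radius_mem_max(1)[OF Bcc b0] by auto
      from ev'(1) obtain u where "eigenvector Bc u ev'"
        unfolding spectrum_def eigenvalue_def by auto
      hence u: "u \<in> carrier_vec b" "u \<noteq> 0\<^sub>v b" "Bc *\<^sub>v u = ev' \<cdot>\<^sub>v u"
        unfolding eigenvector_def using Bcc by auto
      have "eigenvector ?Mc u (- complex_of_real s * ev')"
        unfolding eigenvector_def
      proof (intro conjI)
        show "u \<in> carrier_vec (dim_row ?Mc)" using u Mc by simp
        show "u \<noteq> 0\<^sub>v (dim_row ?Mc)" using u Mc by simp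
        show "?Mc *\<^sub>v u = (- complex_of_real s * ev') \<cdot>\<^sub>v u"
        proof (rule eq_vecI)
          fix i assume "i < dim_vec ((- complex_of_real s * ev') \<cdot>\<^sub>v u)"
          hence i: "i < b" using u by simp
          have "c * (\<Sum>j<b. complex_of_real (M $$ (i,j)) * u $ j) = ev' * u $ i"
            using arg_cong[OF u(3), of "\<lambda>v. v $ i"] Bcsum[OF u(1) i] i u(1) by simp
          hence "complex_of_real s * (c * (\<Sum>j<b. complex_of_real (M $$ (i,j)) * u $ j))
              = complex_of_real s * (ev' * u $ i)" by simp
          hence "(\<Sum>j<b. complex_of_real (M $$ (i,j)) * u $ j) = - complex_of_real s * ev' * u $ i"
            using sc by (simp add: mult.assoc[symmetric]) (metis minus_minus)
          thus "(?Mc *\<^sub>v u) $ i = ((- complex_of_real s * ev') \<cdot>\<^sub>v u) $ i"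
            using Mcsum[OF u(1) i] i u(1) by simp
        qed (use u Mc in simp)
      qed
      hence "- complex_of_real s * ev' \<in> spectrum ?Mc" unfolding spectrum_def eigenvalue_def by auto
      hence "cmod (- complex_of_real s * ev') \<in> cmod ` spectrum ?Mc" by (rule imageI)
      hence "cmod (- complex_of_real s * ev') \<le> spectral_radius ?Mc"
        by (rule spectral_radius_mem_max(2)[OF Mcc b0])
      hence "s * cmod ev' \<le> spectral_radius ?Mc" using s by (simp add: norm_mult)
      hence "s * cmod ev' < s * 1" using s by linarith
      hence "cmod ev' < 1" using s(1) by (simp only: mult_less_cancel_left_pos)
      thus ?thesis using ev'(2) by simp
    qed
    from spectral_radius_jnf_norm_bound_less_1_upper_triangular[OF Bcc rB]
    obtain C where C: "\<And>k. norm_bound (Bc ^\<^sub>m k) C" by blast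
    define E where "E x0 = vec b (\<lambda>j. complex_of_real (x0 $ j - rd $ j))" for x0
    have Ec: "E x0 \<in> carrier_vec b" for x0 by (simp add: E_def)
    have claimB: "\<forall>x0\<in>carrier_vec b. \<forall>i<b. complex_of_real (X x0 k $ i - rd $ i)
        = complex_of_real s ^ k * ((Bc ^\<^sub>m k) *\<^sub>v E x0) $ i" for k
    proof (induction k)
      case 0
      show ?case using Bcc by (auto simp: X0 E_def)
    next
      case (Suc k)
      show ?case
      proof (intro ballI allI impI)
        fix x0 :: "real vec" and i :: nat assume x0: "x0 \<in> carrier_vec b" and i: "i < b"
        define x1 where "x1 = rbar - M *\<^sub>v x0"
        have x1c: "x1 \<in> carrier_vec b" unfolding x1_def by (rule stepc)
        have E1: "E x1 = complex_of_real s \<cdot>\<^sub>v (Bc *\<^sub>v E x0)"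
        proof (rule eq_vecI)
          fix l assume "l < dim_vec (complex_of_real s \<cdot>\<^sub>v (Bc *\<^sub>v E x0))"
          hence l: "l < b" using Bcc by simp
          have "E x1 $ l = complex_of_real ((rbar - M *\<^sub>v x0) $ l - rd $ l)"
            using l by (simp add: E_def x1_def del: of_real_diff)
          also have "\<dots> = complex_of_real (- (\<Sum>j<b. M $$ (l,j) * (x0 $ j - rd $ j)))"
            by (simp only: err[OF rdc rdf x0 l])
          also have "\<dots> = (complex_of_real s * c) * (\<Sum>j<b. complex_of_real (M $$ (l,j)) * E x0 $ j)"
            unfolding sc using l by (simp add: E_def)
          also have "\<dots> = (complex_of_real s \<cdot>\<^sub>v (Bc *\<^sub>v E x0)) $ l"
            using Bcsum[OF Ec l] l Bcc by (simp add: mult.assoc)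
          finally show "E x1 $ l = (complex_of_real s \<cdot>\<^sub>v (Bc *\<^sub>v E x0)) $ l" .
        qed (use Bcc in \<open>simp add: E_def\<close>)
        have Pc: "Bc ^\<^sub>m k \<in> carrier_mat b b" using Bcc by (rule pow_carrier_mat)
        have "(Bc ^\<^sub>m k) *\<^sub>v E x1 = complex_of_real s \<cdot>\<^sub>v ((Bc ^\<^sub>m k) *\<^sub>v (Bc *\<^sub>v E x0))"
          unfolding E1 by (rule mult_mat_vec[OF Pc mult_mat_vec_carrier[OF Bcc Ec]])
        also have "\<dots> = complex_of_real s \<cdot>\<^sub>v ((Bc ^\<^sub>m Suc k) *\<^sub>v E x0)"
          using assoc_mult_mat_vec[OF Pc Bcc Ec] by simp
        finally have "((Bc ^\<^sub>m k) *\<^sub>v E x1) $ i = complex_of_real s * ((Bc ^\<^sub>m Suc k) *\<^sub>v E x0) $ i"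
          using i Bcc by simp
        moreover have "complex_of_real (X x0 (Suc k) $ i - rd $ i) = complex_of_real s ^ k * ((Bc ^\<^sub>m k) *\<^sub>v E x1) $ i"
          unfolding XS2 x1_def[symmetric] using Suc.IH x1c i by blast
        ultimately show "complex_of_real (X x0 (Suc k) $ i - rd $ i)
            = complex_of_real s ^ Suc k * ((Bc ^\<^sub>m Suc k) *\<^sub>v E x0) $ i" by simp
      qed
    qed
    have cv: "vec_conv b (X x0) rd" if x0: "x0 \<in> carrier_vec b" for x0
      unfolding vec_conv_def
    proof (intro allI impI)
      fix i assume i: "i < b"
      define K where "K = (\<Sum>j<b. \<bar>x0 $ j - rd $ j\<bar>)"
      have bnd: "\<bar>X x0 k $ i - rd $ i\<bar> \<le> norm (s ^ k) * (C * K)" for k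
      proof -
        have Pc: "Bc ^\<^sub>m k \<in> carrier_mat b b" using Bcc by (rule pow_carrier_mat)
        have "cmod (((Bc ^\<^sub>m k) *\<^sub>v E x0) $ i) = cmod (\<Sum>j<b. (Bc ^\<^sub>m k) $$ (i,j) * E x0 $ j)"
          using mv_sum[OF Pc Ec i] by simp
        also have "\<dots> \<le> (\<Sum>j<b. cmod ((Bc ^\<^sub>m k) $$ (i,j)) * cmod (E x0 $ j))"
          by (rule order_trans[OF norm_sum]) (simp add: norm_mult)
        also have "\<dots> \<le> (\<Sum>j<b. C * \<bar>x0 $ j - rd $ j\<bar>)"
        proof (rule sum_mono)
          fix j assume "j \<in> {..<b}"
          hence j: "j < b" by simp
          have "cmod ((Bc ^\<^sub>m k) $$ (i,j)) \<le> C" using C[of k] Pc Bcc i j unfolding norm_bound_def by auto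
          moreover have "cmod (E x0 $ j) = \<bar>x0 $ j - rd $ j\<bar>" using j by (simp add: E_def del: of_real_diff)
          ultimately show "cmod ((Bc ^\<^sub>m k) $$ (i,j)) * cmod (E x0 $ j) \<le> C * \<bar>x0 $ j - rd $ j\<bar>"
            by (simp add: mult_right_mono)
        qed
        also have "\<dots> = C * K" by (simp add: K_def sum_distrib_left)
        finally have h: "cmod (((Bc ^\<^sub>m k) *\<^sub>v E x0) $ i) \<le> C * K" .
        have "\<bar>X x0 k $ i - rd $ i\<bar> = cmod (complex_of_real (X x0 k $ i - rd $ i))" by (rule norm_of_real[symmetric])
        also have "\<dots> = s ^ k * cmod (((Bc ^\<^sub>m k) *\<^sub>v E x0) $ i)"
          using claimB x0 i s(1) by (simp add: norm_mult norm_power)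
        also have "\<dots> \<le> s ^ k * (C * K)" using h s(1) by (simp add: mult_left_mono)
        finally show ?thesis using s(1) by simp
      qed
      have "(\<lambda>k. s ^ k) \<longlonglongrightarrow> 0" using s by (intro LIMSEQ_power_zero) simp
      hence "(\<lambda>k. X x0 k $ i - rd $ i) \<longlonglongrightarrow> 0"
        by (rule tendsto_0_le[where K = "C * K"]) (use bnd in simp)
      thus "(\<lambda>k. X x0 k $ i) \<longlonglongrightarrow> rd $ i" by (rule LIM_zero_cancel)
    qed
    show CONV unfolding CONV_def X_def[symmetric] using rdc rdf uq cv by blast
  qed
  show ?thesis using partA partB partC unfolding X_def by blast
qed
theorem theorem3:
  fixes b m :: nat
    and fac var :: "nat \<Rightarrow> nat"
    and c rm lam mu vs :: "nat \<Rightarrow> real"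
    and q :: "nat \<Rightarrow> real"
    and \<alpha>1 \<alpha>2 :: real
  assumes b: "b \<ge> 1"
    and fac_range: "\<forall>e<b. fac e < m"
    and fac_deg: "\<forall>i<m. \<exists>e<b. fac e = i"
    and grouped: "\<forall>e e'. e < e' \<and> e' < b \<longrightarrow> fac e \<le> fac e'"
    and simple: "\<forall>e<b. \<forall>e'<b. fac e = fac e' \<and> var e = var e' \<longrightarrow> e = e'"
    and c_nz: "\<forall>e<b. c e \<noteq> 0"
    and lam_pos: "\<forall>e<b. lam (var e) > 0"
    and vs_pos: "\<forall>e<b. vs e > 0"
    and q01: "\<forall>e<b. q e \<in> {0, 1}"
    and a1: "0 < \<alpha>1" "\<alpha>1 < 1"
    and a2: "\<alpha>2 = 1 - \<alpha>1"
  defines "\<Omega> \<equiv> Omega b fac var c lam vs"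
    and "rt \<equiv> rtilde b fac var c rm lam mu vs"
    and "Q \<equiv> mat_diag b (\<lambda>e. 1 - q e)"
    and "R \<equiv> mat_diag b q"
  defines "rbar \<equiv> (Q + \<alpha>2 \<cdot>\<^sub>m R) *\<^sub>v rt"
    and "\<Omega>bar \<equiv> Q * \<Omega> + \<alpha>2 \<cdot>\<^sub>m (R * \<Omega>) - \<alpha>1 \<cdot>\<^sub>m R"
  defines "CONV \<equiv> (\<exists>rd \<in> carrier_vec b.
              rd = rbar - \<Omega>bar *\<^sub>v rd
            \<and> (\<forall>y \<in> carrier_vec b. y = rbar - \<Omega>bar *\<^sub>v y \<longrightarrow> y = rd)
            \<and> (\<forall>x0 \<in> carrier_vec b. vec_conv b (affine_iter rbar \<Omega>bar x0) rd))"
  shows "(CONV \<longleftrightarrow> spectral_radius (map_mat complex_of_real \<Omega>bar) < 1)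
       \<and> (CONV \<longrightarrow> mat_inverse (1\<^sub>m b + \<Omega>) \<noteq> None
             \<and> (\<forall>x0 \<in> carrier_vec b.
                   vec_conv b (affine_iter rbar \<Omega>bar x0) (the (mat_inverse (1\<^sub>m b + \<Omega>)) *\<^sub>v rt)))"
proof -
  have Oc: "\<Omega> \<in> carrier_mat b b"
    unfolding \<Omega>_def Omega_def Dmat_def diag_inv_def
    by (intro carrier_matI) (simp_all add: diag_inv_def)
  have rc: "rt \<in> carrier_vec b"
    unfolding rt_def rtilde_def Dmat_def diag_inv_def carrier_vec_def by simp
  show ?thesis
    using main[OF b Oc rc q01 a1 a2] unfolding CONV_def \<Omega>bar_def rbar_def Q_def R_def .
qed

end
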